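(* Let $k>1$ be real, let $X=1/(k-1)$, and let $E$ be any execution of Algorithm B (described in the context) by $n$ processes. For $i\ge0$, let $V_i$ be the set of Increment operations in $E$ such that the executing process's local variable $\mathit{index}$ equals $i$ at the beginning of the operation. Then $|V_i|<n(X+1)$ for every $i\ge0$.
   Context: Shared objects are treated as atomic. An exact counter supports Increment and Read; a Read returns the number of preceding Increments. A max-register supports MaxWrite$(v)$ and MaxRead; a MaxRead returns the largest value among all preceding MaxWrites, or the initial value if there was none. Algorithm B uses: - $X=1/(k-1)$; - a shared array $\mathit{Bucket}[0..\lceil m/(Xn)\rceil-1]$ of exact counters, each initially $0$; - a shared max-register $\mathit{logNumIncrems}$ with initial value $-1$; - for each process, a local variable $\mathit{index}$, initially $0$. Increment(): - $\mathit{Bucket}[\mathit{index}]$.Increment(). - $val\gets\mathit{Bucket}[\mathit{index}]$.Read(). - If $val<Xn$, then $\mathit{logNumIncrems}$.MaxWrite$(\lfloor\log_k(val+\mathit{index}\cdot Xn)\rfloor)$. - Otherwise: - $\mathit{index}\gets\mathit{index}+1$; - $\mathit{logNumIncrems}$.MaxWrite$(\lfloor\log_k(\mathit{index}\cdot Xn)\rfloor)$. Read(): - $r\gets\mathit{logNumIncrems}$.MaxRead(). - If $r\ge0$, return $k^{r+1}$; otherwise return $0$. *)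

theory Defs
  imports Complex_Main
begin

text \<open>An execution is a finite sequence of events: invocation of an Increment or a Read
  by an idle process, or one atomic shared-memory step of a process that has a
  pending operation. Local computation is merged into the preceding atomic step.\<close>

datatype pc = Idle | Inc1 | Inc2 | Inc3 | Rd1

record lstate =
  pc :: pc
  idx :: nat
  wval :: int       \<comment> \<open>value to be MaxWritten in the last step of Increment\<close>
  ret :: real

record gstate =
  bucket :: "nat \<Rightarrow> nat"
  lni :: int               \<comment> \<open>max-register logNumIncrems\<close>
  loc :: "nat \<Rightarrow> lstate"

datatype event = InvInc nat | InvRead nat | Step nat

definition algX :: "real \<Rightarrow> real" where
  "algX k = 1 / (k - 1)"

definition bsize :: "real \<Rightarrow> nat \<Rightarrow> nat \<Rightarrow> nat" where
  "bsize k n m = nat \<lceil>real m / (algX k * real n)\<rceil>"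

definition init_state :: gstate where
  "init_state = \<lparr> bucket = (\<lambda>_. 0), lni = -1,
     loc = (\<lambda>_. \<lparr> pc = Idle, idx = 0, wval = 0, ret = 0 \<rparr>) \<rparr>"

definition step :: "real \<Rightarrow> nat \<Rightarrow> nat \<Rightarrow> gstate \<Rightarrow> event \<Rightarrow> gstate option" where
  "step k n m s e = (case e of
     InvInc p \<Rightarrow> if p < n \<and> pc (loc s p) = Idle
        then Some (s\<lparr>loc := (loc s)(p := (loc s p)\<lparr>pc := Inc1\<rparr>)\<rparr>) else None
   | InvRead p \<Rightarrow> if p < n \<and> pc (loc s p) = Idle
        then Some (s\<lparr>loc := (loc s)(p := (loc s p)\<lparr>pc := Rd1\<rparr>)\<rparr>) else None
   | Step p \<Rightarrow> if \<not> p < n then None else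
       (let l = loc s p; i = idx l; Xn = algX k * real n in
        case pc l of
          Idle \<Rightarrow> None
        | Inc1 \<Rightarrow> if i < bsize k n m then
              Some (s\<lparr>bucket := (bucket s)(i := bucket s i + 1),
                      loc := (loc s)(p := l\<lparr>pc := Inc2\<rparr>)\<rparr>)
            else None
        | Inc2 \<Rightarrow> if i < bsize k n m then
              (let v = bucket s i in
               if real v < Xn then
                 Some (s\<lparr>loc := (loc s)(p := l\<lparr>pc := Inc3,
                        wval := \<lfloor>log k (real v + real i * Xn)\<rfloor>\<rparr>)\<rparr>)
               else
                 Some (s\<lparr>loc := (loc s)(p := l\<lparr>pc := Inc3, idx := i + 1,
                        wval := \<lfloor>log k (real (i + 1) * Xn)\<rfloor>\<rparr>)\<rparr>))
            else None
        | Inc3 \<Rightarrow> Some (s\<lparr>lni := max (lni s) (wval l),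
                            loc := (loc s)(p := l\<lparr>pc := Idle\<rparr>)\<rparr>)
        | Rd1 \<Rightarrow> (let r = lni s in
              Some (s\<lparr>loc := (loc s)(p := l\<lparr>pc := Idle,
                      ret := (if r \<ge> 0 then k powr (real_of_int (r + 1)) else 0)\<rparr>)\<rparr>))))"

fun run :: "real \<Rightarrow> nat \<Rightarrow> nat \<Rightarrow> gstate \<Rightarrow> event list \<Rightarrow> gstate option" where
  "run k n m s [] = Some s"
| "run k n m s (e # es) = (case step k n m s e of None \<Rightarrow> None | Some s' \<Rightarrow> run k n m s' es)"

definition is_execution :: "real \<Rightarrow> nat \<Rightarrow> nat \<Rightarrow> event list \<Rightarrow> bool" where
  "is_execution k n m es \<longleftrightarrow> run k n m init_state es \<noteq> None"

text \<open>V i: the Increment operations (identified by the position of their invocation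
  event) whose process has index = i at the beginning of the operation.\<close>
definition V :: "real \<Rightarrow> nat \<Rightarrow> nat \<Rightarrow> event list \<Rightarrow> nat \<Rightarrow> nat set" where
  "V k n m es i = {j. j < length es \<and> (\<exists>p. es ! j = InvInc p \<and>
      idx (loc (the (run k n m init_state (take j es))) p) = i)}"

end

theory Submission
  imports Defs
begin

lemma run_snoc:
  "run k n m s (es @ [e]) = (case run k n m s es of None \<Rightarrow> None | Some s' \<Rightarrow> step k n m s' e)"
  by (induction es arbitrary: s) (auto split: option.splits)

lemma V_snoc:
  "V k n m (es @ [e]) i = V k n m es i \<union>
     (if (\<exists>p. e = InvInc p \<and> idx (loc (the (run k n m init_state es)) p) = i) then {length es} else {})"
  unfolding V_def
  by (auto simp: nth_append less_Suc_eq)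

definition cnt :: "nat \<Rightarrow> ('a \<Rightarrow> bool) \<Rightarrow> (nat \<Rightarrow> 'a) \<Rightarrow> nat" where
  "cnt n P f = card {q. q<n \<and> P (f q)}"

lemma card_add1: "finite A \<Longrightarrow> p \<notin> A \<Longrightarrow> card (A \<union> (if b then {p} else {})) = card A + (if b then 1 else 0)"
  by (cases b) auto

lemma card_upd:
  fixes f :: "nat \<Rightarrow> 'a"
  assumes "p < n"
  shows "cnt n P (f(p:=l')) + (if P (f p) then 1 else 0)
       = cnt n P f + (if P l' then 1 else 0)"
proof -
  let ?A = "{q. q<n \<and> P (f q)} - {p}"
  have fA: "finite ?A" by auto
  have pA: "p \<notin> ?A" by auto
  have e1: "{q. q<n \<and> P ((f(p:=l')) q)} = ?A \<union> (if P l' then {p} else {})"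
    using assms by auto
  have e2: "{q. q<n \<and> P (f q)} = ?A \<union> (if P (f p) then {p} else {})"
    using assms by auto
  have c1: "card {q. q<n \<and> P ((f(p:=l')) q)} = card ?A + (if P l' then 1 else 0)"
    by (subst e1) (rule card_add1[OF fA pA])
  have c2: "card {q. q<n \<and> P (f q)} = card ?A + (if P (f p) then 1 else 0)"
    by (subst e2) (rule card_add1[OF fA pA])
  show ?thesis
    unfolding cnt_def c1 c2 by simp
qed

definition Qs :: "nat \<Rightarrow> nat \<Rightarrow> gstate \<Rightarrow> nat set" where
  "Qs n i s = {p. p<n \<and> (idx (loc s p) = i \<and> pc (loc s p) = Inc1)}"
definition Cs :: "nat \<Rightarrow> nat \<Rightarrow> gstate \<Rightarrow> nat set" where
  "Cs n i s = {p. p<n \<and> (i < idx (loc s p) \<or> (idx (loc s p) = i \<and> pc (loc s p) = Inc2))}"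

lemma Qs_cnt: "Qs n i s = {p. p<n \<and> (\<lambda>l. idx l = i \<and> pc l = Inc1) (loc s p)}" by (simp add: Qs_def)
lemma Cs_cnt: "Cs n i s = {p. p<n \<and> (\<lambda>l. i < idx l \<or> (idx l = i \<and> pc l = Inc2)) (loc s p)}" by (simp add: Cs_def)
lemma cQ: "card (Qs n i s) = cnt n (\<lambda>l. idx l = i \<and> pc l = Inc1) (loc s)"
  by (simp add: Qs_def cnt_def)
lemma cC: "card (Cs n i s) = cnt n (\<lambda>l. i < idx l \<or> (idx l = i \<and> pc l = Inc2)) (loc s)"
  by (simp add: Cs_def cnt_def)

lemma invariant:
  assumes "run k n m init_state es = Some s"
  shows "card (V k n m es i) = bucket s i + card (Qs n i s) \<and>
         real (bucket s i) \<le> real (nat (\<lceil>algX k * real n\<rceil> - 1)) + real (card (Cs n i s))"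
  using assms
proof (induction es arbitrary: s rule: rev_induct)
  case Nil
  then have "s = init_state" by simp
  then show ?case by (simp add: V_def init_state_def Qs_def Cs_def)
next
  case (snoc e es)
  let ?B = "real (nat (\<lceil>algX k * real n\<rceil> - 1))"
  obtain s0 where r0: "run k n m init_state es = Some s0" and st: "step k n m s0 e = Some s"
    using snoc.prems by (auto simp: run_snoc split: option.splits)
  note IH = snoc.IH[OF r0]
  have Bv: "real v < algX k * real n \<Longrightarrow> real v \<le> ?B" for v :: nat
  proof -
    assume "real v < algX k * real n"
    then have "int v < \<lceil>algX k * real n\<rceil>"
    proof -
      have "real v < real_of_int \<lceil>algX k * real n\<rceil>"
        using \<open>real v < _\<close> le_of_int_ceiling[of "algX k * real n"] by linarith
      then have "real_of_int (int v) < real_of_int \<lceil>algX k * real n\<rceil>" by simp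
      then show ?thesis by (simp only: of_int_less_iff)
    qed
    then show ?thesis by linarith
  qed
  have V: "V k n m (es @ [e]) i = V k n m es i \<union>
     (if (\<exists>p. e = InvInc p \<and> idx (loc s0 p) = i) then {length es} else {})"
    using V_snoc[of k n m es e i] r0 by simp
  have finV: "finite (V k n m es i)" by (simp add: V_def)
  have notin: "length es \<notin> V k n m es i" by (simp add: V_def)
  show ?case
  proof (cases e)
    case (InvInc p)
    have pn: "p < n" and idle: "pc (loc s0 p) = Idle" and
      s: "s = s0\<lparr>loc := (loc s0)(p := (loc s0 p)\<lparr>pc := Inc1\<rparr>)\<rparr>"
      using st InvInc by (auto simp: step_def split: if_splits)
    have q: "card (Qs n i s) = card (Qs n i s0) + (if idx (loc s0 p) = i then 1 else 0)"
      using card_upd[OF pn, where P="\<lambda>l. idx l = i \<and> pc l = Inc1" and f="loc s0" and l'="(loc s0 p)\<lparr>pc := Inc1\<rparr>"]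
        pn idle by (simp add: cQ s)
    have c: "card (Cs n i s) = card (Cs n i s0)"
      using card_upd[OF pn, where P="\<lambda>l. i < idx l \<or> (idx l = i \<and> pc l = Inc2)" and f="loc s0" and l'="(loc s0 p)\<lparr>pc := Inc1\<rparr>"]
        pn idle by (simp add: cC s)
    have v: "card (V k n m (es @ [e]) i) = card (V k n m es i) + (if idx (loc s0 p) = i then 1 else 0)"
      using V InvInc finV notin by auto
    show ?thesis using IH q c v s by simp
  next
    case (InvRead p)
    have pn: "p < n" and idle: "pc (loc s0 p) = Idle" and
      s: "s = s0\<lparr>loc := (loc s0)(p := (loc s0 p)\<lparr>pc := Rd1\<rparr>)\<rparr>"
      using st InvRead by (auto simp: step_def split: if_splits)
    have q: "card (Qs n i s) = card (Qs n i s0)"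
      using card_upd[OF pn, where P="\<lambda>l. idx l = i \<and> pc l = Inc1" and f="loc s0" and l'="(loc s0 p)\<lparr>pc := Rd1\<rparr>"]
        pn idle by (simp add: cQ s)
    have c: "card (Cs n i s) = card (Cs n i s0)"
      using card_upd[OF pn, where P="\<lambda>l. i < idx l \<or> (idx l = i \<and> pc l = Inc2)" and f="loc s0" and l'="(loc s0 p)\<lparr>pc := Rd1\<rparr>"]
        pn idle by (simp add: cC s)
    have v: "V k n m (es @ [e]) i = V k n m es i" using V InvRead by auto
    show ?thesis using IH q c v s by simp
  next
    case (Step p)
    have pn: "p < n" using st Step by (auto simp: step_def split: if_splits)
    have v: "V k n m (es @ [e]) i = V k n m es i" using V Step by auto
    define l where "l = loc s0 p"
    define j where "j = idx l"
    show ?thesis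
    proof (cases "pc l")
      case Idle
      then show ?thesis using st Step pn by (simp add: step_def l_def)
    next
      case Inc1
      have s: "s = s0\<lparr>bucket := (bucket s0)(j := bucket s0 j + 1), loc := (loc s0)(p := l\<lparr>pc := Inc2\<rparr>)\<rparr>"
        using st Step pn Inc1 by (auto simp: step_def l_def j_def Let_def split: if_splits)
      have q: "card (Qs n i s) + (if j = i then 1 else 0) = card (Qs n i s0)"
        using card_upd[OF pn, where P="\<lambda>l. idx l = i \<and> pc l = Inc1" and f="loc s0" and l'="l\<lparr>pc := Inc2\<rparr>"]
          pn Inc1 by (simp add: cQ s l_def j_def)
      have c: "card (Cs n i s) = card (Cs n i s0) + (if j = i then 1 else 0)"
        using card_upd[OF pn, where P="\<lambda>l. i < idx l \<or> (idx l = i \<and> pc l = Inc2)" and f="loc s0" and l'="l\<lparr>pc := Inc2\<rparr>"]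
          pn Inc1 by (cases "j = i"; cases "i < j") (auto simp: cC s l_def j_def)
      have b: "bucket s i = bucket s0 i + (if j = i then 1 else 0)" using s by simp
      show ?thesis using IH q c b v by (cases "j = i") auto
    next
      case Inc2
      show ?thesis
      proof (cases "real (bucket s0 j) < algX k * real n")
        case True
        have s: "s = s0\<lparr>loc := (loc s0)(p := l\<lparr>pc := Inc3,
                        wval := \<lfloor>log k (real (bucket s0 j) + real j * (algX k * real n))\<rfloor>\<rparr>)\<rparr>"
          using st Step pn Inc2 True by (auto simp: step_def l_def j_def Let_def split: if_splits)
        have q: "card (Qs n i s) = card (Qs n i s0)"
          using card_upd[OF pn, where P="\<lambda>l. idx l = i \<and> pc l = Inc1" and f="loc s0" and l'="l\<lparr>pc := Inc3,
                        wval := \<lfloor>log k (real (bucket s0 j) + real j * (algX k * real n))\<rfloor>\<rparr>"]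
            pn Inc2 by (simp add: cQ s l_def j_def)
        have c: "card (Cs n i s) + (if j = i then 1 else 0) = card (Cs n i s0)"
          using card_upd[OF pn, where P="\<lambda>l. i < idx l \<or> (idx l = i \<and> pc l = Inc2)" and f="loc s0" and l'="l\<lparr>pc := Inc3,
                        wval := \<lfloor>log k (real (bucket s0 j) + real j * (algX k * real n))\<rfloor>\<rparr>"]
            pn Inc2 by (cases "j = i"; cases "i < j") (simp_all add: cC s l_def j_def)
        have b: "bucket s i = bucket s0 i" using s by simp
        show ?thesis
        proof (cases "j = i")
          case True
          with Bv[OF \<open>real (bucket s0 j) < _\<close>] have "real (bucket s0 i) \<le> ?B" by simp
          then show ?thesis using IH q b v by simp
        next
          case False
          then show ?thesis using IH q c b v by simp
        qed
      next
        case False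
        define w where "w = \<lfloor>log k (real (j + 1) * (algX k * real n))\<rfloor>"
        have s: "s = s0\<lparr>loc := (loc s0)(p := l\<lparr>pc := Inc3, idx := j + 1, wval := w\<rparr>)\<rparr>"
          using st Step pn Inc2 False by (auto simp: step_def l_def j_def w_def Let_def split: if_splits)
        have q: "card (Qs n i s) = card (Qs n i s0)"
          using card_upd[OF pn, where P="\<lambda>l. idx l = i \<and> pc l = Inc1" and f="loc s0" and l'="l\<lparr>pc := Inc3, idx := j + 1, wval := w\<rparr>"]
            pn Inc2 by (simp add: cQ s l_def j_def)
        have c: "card (Cs n i s) = card (Cs n i s0)"
          using card_upd[OF pn, where P="\<lambda>l. i < idx l \<or> (idx l = i \<and> pc l = Inc2)" and f="loc s0" and l'="l\<lparr>pc := Inc3, idx := j + 1, wval := w\<rparr>"]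
            pn Inc2 by (cases "i < j \<or> i = j") (auto simp: cC s l_def j_def less_Suc_eq eq_commute[of i])
        have b: "bucket s i = bucket s0 i" using s by simp
        show ?thesis using IH q c b v by simp
      qed
    next
      case Inc3
      have s: "s = s0\<lparr>lni := max (lni s0) (wval l), loc := (loc s0)(p := l\<lparr>pc := Idle\<rparr>)\<rparr>"
        using st Step pn Inc3 by (auto simp: step_def l_def Let_def)
      have q: "card (Qs n i s) = card (Qs n i s0)"
        using card_upd[OF pn, where P="\<lambda>l. idx l = i \<and> pc l = Inc1" and f="loc s0" and l'="l\<lparr>pc := Idle\<rparr>"]
          pn Inc3 by (simp add: cQ s l_def)
      have c: "card (Cs n i s) = card (Cs n i s0)"
        using card_upd[OF pn, where P="\<lambda>l. i < idx l \<or> (idx l = i \<and> pc l = Inc2)" and f="loc s0" and l'="l\<lparr>pc := Idle\<rparr>"]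
          pn Inc3 by (simp add: cC s l_def)
      show ?thesis using IH q c v s by simp
    next
      case Rd1
      define r where "r = (if lni s0 \<ge> 0 then k powr (real_of_int (lni s0 + 1)) else 0)"
      have s: "s = s0\<lparr>loc := (loc s0)(p := l\<lparr>pc := Idle, ret := r\<rparr>)\<rparr>"
        using st Step pn Rd1 by (auto simp: step_def l_def r_def Let_def)
      have q: "card (Qs n i s) = card (Qs n i s0)"
        using card_upd[OF pn, where P="\<lambda>l. idx l = i \<and> pc l = Inc1" and f="loc s0" and l'="l\<lparr>pc := Idle, ret := r\<rparr>"]
          pn Rd1 by (simp add: cQ s l_def)
      have c: "card (Cs n i s) = card (Cs n i s0)"
        using card_upd[OF pn, where P="\<lambda>l. i < idx l \<or> (idx l = i \<and> pc l = Inc2)" and f="loc s0" and l'="l\<lparr>pc := Idle, ret := r\<rparr>"]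
          pn Rd1 by (simp add: cC s l_def)
      show ?thesis using IH q c v s by simp
    qed
  qed
qed

theorem lemma12:
  fixes k :: real and n m :: nat and es :: "event list" and i :: nat
  assumes "k > 1" and "n \<ge> 1" and "is_execution k n m es"
  shows "real (card (V k n m es i)) < real n * (algX k + 1)"
proof -
  obtain s where r: "run k n m init_state es = Some s"
    using assms(3) by (auto simp: is_execution_def)
  note I = invariant[OF r, of i]
  have disj: "Cs n i s \<inter> Qs n i s = {}" by (auto simp: Cs_def Qs_def)
  have sub: "Cs n i s \<union> Qs n i s \<subseteq> {..<n}" by (auto simp: Cs_def Qs_def)
  have "card (Cs n i s) + card (Qs n i s) = card (Cs n i s \<union> Qs n i s)"
    using disj sub by (metis card_Un_disjoint finite_lessThan finite_subset le_sup_iff)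
  also have "\<dots> \<le> n" using card_mono[OF _ sub] by simp
  finally have cq: "real (card (Cs n i s)) + real (card (Qs n i s)) \<le> real n" by linarith
  have Xn: "algX k * real n > 0" using assms(1,2) by (simp add: algX_def)
  have "real (nat (\<lceil>algX k * real n\<rceil> - 1)) < algX k * real n"
  proof -
    have "\<lceil>algX k * real n\<rceil> \<ge> 1" using Xn by simp
    moreover have "real_of_int \<lceil>algX k * real n\<rceil> < algX k * real n + 1" by (simp add: ceiling_less_cancel ceiling_correct)
    ultimately show ?thesis by simp
  qed
  moreover have "real (nat (\<lceil>algX k * real n\<rceil> - 1)) = real_of_int \<lceil>algX k * real n\<rceil> - 1"
    using Xn by simp
  moreover have "real (card (V k n m es i)) = real (bucket s i) + real (card (Qs n i s))"
    using I by simp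
  ultimately show ?thesis using I cq by (simp add: algebra_simps)
qed

end
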